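(* Let $G$ be a finite group and let $X = \{[a,b]^k \mid a,b \in G,\ (|a|,|b|)=1,\ k \in \mathbb{Z}\}$. Assume that for all $x,y \in X$ with $(|x|,|y|)=1$ we have $|xy|=|x|\,|y|$. Let $x \in X$ and let $N$ be a subgroup of $G$ normalized by $x$. If $(|x|,|N|)=1$, then $[x,N]=1$, i.e. $x$ centralizes $N$.
   Context: All groups are finite. $|x|$ denotes the order of an element $x$ and $|N|$ the order of a subgroup $N$. $[a,b]=a^{-1}b^{-1}ab$, and $[x,N]$ is the subgroup generated by all $[x,y]$, $y\in N$. *)

theory Defs
  imports "HOL-Algebra.Algebra"
begin

definition commutator :: "('a, 'b) monoid_scheme \<Rightarrow> 'a \<Rightarrow> 'a \<Rightarrow> 'a" where
  "commutator G a b = inv\<^bsub>G\<^esub> a \<otimes>\<^bsub>G\<^esub> inv\<^bsub>G\<^esub> b \<otimes>\<^bsub>G\<^esub> a \<otimes>\<^bsub>G\<^esub> b"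

definition coprime_comm_powers :: "('a, 'b) monoid_scheme \<Rightarrow> 'a set" where
  "coprime_comm_powers G = {(commutator G a b) [^]\<^bsub>G\<^esub> (k::int) | a b k.
      a \<in> carrier G \<and> b \<in> carrier G \<and> coprime (group.ord G a) (group.ord G b)}"

definition comm_elem_subgroup :: "('a, 'b) monoid_scheme \<Rightarrow> 'a \<Rightarrow> 'a set \<Rightarrow> 'a set" where
  "comm_elem_subgroup G x N = generate G {commutator G x y | y. y \<in> N}"

end

theory Submission
  imports Defs
begin

lemma ord_sub_dvd:
  assumes "group G" "subgroup N G" "finite N" "y \<in> N"
  shows "group.ord G y dvd card N"
proof -
  let ?H = "G\<lparr>carrier := N\<rparr>"
  have gH: "group ?H" using group.subgroup_imp_group[OF assms(1,2)] .
  have yG: "y \<in> carrier G" by (rule subgroup.mem_carrier[OF assms(2,4)])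
  have yH: "y \<in> carrier ?H" using assms(4) by simp
  have d: "group.ord ?H y dvd order ?H" by (rule group.ord_dvd_group_order[OF gH yH])
  have "group.ord G y = group.ord ?H y"
    unfolding group.ord_unique[OF assms(1) yG]
  proof
    fix n :: nat
    have p: "y [^]\<^bsub>?H\<^esub> n = y [^]\<^bsub>G\<^esub> n"
      by (rule monoid.nat_pow_consistent[OF group.is_monoid[OF assms(1)], symmetric])
    have o: "\<one>\<^bsub>?H\<^esub> = \<one>\<^bsub>G\<^esub>" by simp
    show "y [^]\<^bsub>G\<^esub> n = \<one>\<^bsub>G\<^esub> \<longleftrightarrow> group.ord ?H y dvd n"
      using group.pow_eq_id[OF gH yH, of n] unfolding p o .
  qed
  moreover have "order ?H = card N" by (simp add: order_def)
  ultimately show ?thesis using d by simp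
qed

lemma conj_pow:
  fixes G (structure)
  assumes "group G" "x \<in> carrier G" "y \<in> carrier G"
  shows "(inv\<^bsub>G\<^esub> y \<otimes>\<^bsub>G\<^esub> x \<otimes>\<^bsub>G\<^esub> y) [^]\<^bsub>G\<^esub> (n::nat) = inv\<^bsub>G\<^esub> y \<otimes>\<^bsub>G\<^esub> x [^]\<^bsub>G\<^esub> n \<otimes>\<^bsub>G\<^esub> y"
proof (induction n)
  case 0
  interpret group G by fact
  show ?case using assms by simp
next
  case (Suc n)
  interpret group G by fact
  have i: "inv y \<in> carrier G" and xn: "x [^] n \<in> carrier G" using assms by auto
  have "(inv y \<otimes> x \<otimes> y) [^] Suc n = (inv y \<otimes> x [^] n \<otimes> y) \<otimes> (inv y \<otimes> x \<otimes> y)"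
    using Suc by (simp only: nat_pow_Suc)
  also have "\<dots> = inv y \<otimes> x [^] n \<otimes> (y \<otimes> inv y) \<otimes> x \<otimes> y"
    using assms i xn by (simp only: m_assoc m_closed)
  also have "\<dots> = inv y \<otimes> (x [^] n \<otimes> x) \<otimes> y"
    using assms i xn by (simp add: m_assoc)
  also have "\<dots> = inv y \<otimes> x [^] Suc n \<otimes> y" by (simp only: nat_pow_Suc)
  finally show ?case .
qed

lemma conj_ord:
  fixes G (structure)
  assumes "group G" "x \<in> carrier G" "y \<in> carrier G"
  shows "group.ord G (inv\<^bsub>G\<^esub> y \<otimes>\<^bsub>G\<^esub> x \<otimes>\<^bsub>G\<^esub> y) = group.ord G x"
proof -
  interpret group G by fact
  have "\<forall>n::nat. (inv y \<otimes> x \<otimes> y) [^] n = \<one> \<longleftrightarrow> x [^] n = \<one>"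
  proof
    fix n :: nat
    have e: "(inv y \<otimes> x \<otimes> y) [^] n = inv y \<otimes> x [^] n \<otimes> y" by (rule conj_pow[OF assms])
    have xn: "x [^] n \<in> carrier G" using assms by simp
    have iy: "inv y \<in> carrier G" using assms by simp
    have 1: "inv y \<otimes> x [^] n \<otimes> y = \<one> \<longleftrightarrow> inv y \<otimes> x [^] n \<otimes> y = inv y \<otimes> y"
      using assms by (simp only: l_inv)
    have 2: "inv y \<otimes> x [^] n \<otimes> y = inv y \<otimes> y \<longleftrightarrow> inv y \<otimes> x [^] n = inv y"
      by (rule right_cancel[OF assms(3) m_closed[OF iy xn] iy])
    have 3: "inv y \<otimes> x [^] n = inv y \<longleftrightarrow> x [^] n = \<one>"
      by (rule l_cancel_one[OF iy xn])
    show "(inv y \<otimes> x \<otimes> y) [^] n = \<one> \<longleftrightarrow> x [^] n = \<one>"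
      unfolding e 1 2 3 ..
  qed
  note eq = this
  have cG: "inv y \<otimes> x \<otimes> y \<in> carrier G" using assms by simp
  show ?thesis unfolding ord_unique[OF cG]
  proof
    fix n :: nat
    show "(inv y \<otimes> x \<otimes> y) [^] n = \<one> \<longleftrightarrow> ord x dvd n"
      using eq pow_eq_id[OF assms(2), of n] by blast
  qed
qed

theorem mainTheorem2:
  fixes G (structure)
  assumes "group G" and "finite (carrier G)"
    and hyp: "\<forall>x\<in>coprime_comm_powers G. \<forall>y\<in>coprime_comm_powers G.
               coprime (group.ord G x) (group.ord G y) \<longrightarrow>
               group.ord G (x \<otimes> y) = group.ord G x * group.ord G y"
    and "x \<in> coprime_comm_powers G"
    and "subgroup N G"
    and "{x \<otimes> n \<otimes> inv x | n. n \<in> N} = N"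
    and "coprime (group.ord G x) (card N)"
  shows "comm_elem_subgroup G x N = {\<one>}"
proof -
  interpret group G by fact
  have xG: "x \<in> carrier G" using assms(4) unfolding coprime_comm_powers_def commutator_def by auto
  have finN: "finite N" using assms(2,5) subgroup.subset finite_subset by blast
  have "commutator G x y = \<one>" if yN: "y \<in> N" for y
  proof -
    have yG: "y \<in> carrier G" by (rule subgroup.mem_carrier[OF assms(5) yN])
    have cy: "coprime (ord x) (ord y)"
      by (rule coprime_divisors[OF dvd_refl ord_sub_dvd[OF assms(1,5) finN yN] assms(7)])
    have "inv y \<in> N" by (rule subgroup.m_inv_closed[OF assms(5) yN])
    hence "inv y \<in> {x \<otimes> n \<otimes> inv x | n. n \<in> N}" by (subst assms(6))
    then obtain n where nN: "n \<in> N" and n: "inv y = x \<otimes> n \<otimes> inv x" by blast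
    have nG: "n \<in> carrier G" by (rule subgroup.mem_carrier[OF assms(5) nN])
    have "inv x \<otimes> inv y \<otimes> x = n" unfolding n using xG nG
      by (simp add: m_assoc inv_solve_left')
    hence cN: "commutator G x y \<in> N" unfolding commutator_def
      using subgroup.m_closed[OF assms(5) nN yN] by simp
    have cG: "commutator G x y \<in> carrier G" by (rule subgroup.mem_carrier[OF assms(5) cN])
    have cX: "commutator G x y \<in> coprime_comm_powers G"
      unfolding coprime_comm_powers_def
      apply (rule CollectI, rule exI[of _ x], rule exI[of _ y], rule exI[of _ "1::int"])
      using xG yG cy cG by simp
    have cc: "coprime (ord x) (ord (commutator G x y))"
      by (rule coprime_divisors[OF dvd_refl ord_sub_dvd[OF assms(1,5) finN cN] assms(7)])
    have "x \<otimes> commutator G x y = inv y \<otimes> x \<otimes> y" unfolding commutator_def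
      using xG yG by (simp add: m_assoc[symmetric])
    note xc = this
    have "ord (x \<otimes> commutator G x y) = ord x * ord (commutator G x y)"
      using hyp assms(4) cX cc by blast
    hence "ord x * ord (commutator G x y) = ord x"
      using xc conj_ord[OF assms(1) xG yG] by auto
    moreover have "ord x \<ge> 1" using ord_ge_1 assms(2) xG by blast
    ultimately have "ord (commutator G x y) = 1" by simp
    thus ?thesis using ord_eq_1 cG by blast
  qed
  hence "{commutator G x y | y. y \<in> N} \<subseteq> {\<one>}" by blast
  hence "comm_elem_subgroup G x N \<subseteq> {\<one>}" unfolding comm_elem_subgroup_def
    using mono_generate[of _ "{\<one>}"] generate_one by blast
  moreover have "\<one> \<in> comm_elem_subgroup G x N" unfolding comm_elem_subgroup_def
    by (rule generate.one)
  ultimately show ?thesis by blast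
qed

end
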